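(* Let $K$ be the set of double cones of Minkowski spacetime $\mathbb M^4$ with symmetry group the Poincaré group $\mathscr P^\uparrow_+$. There exists $f\in\mathrm C^0(K,\mathcal D)^{\mathscr P^\uparrow_+}$ such that $f_a$ is nonzero and non-negative for every $a\in K$. Furthermore, the 1-cochain $\delta f$ belongs to $\mathrm C^1(K,\mathcal D)^{\mathscr P^\uparrow_+}$ and satisfies: (i) $(\delta f)^{ev}_b=f_{|b|}$ is nonzero and non-negative for every 1-simplex $b$; (ii) $(\delta f)^{odd}_b=f_{\partial_0b}-f_{\partial_1b}\neq0$ for every 1-simplex $b$ with $\partial_0b\ne\partial_1b$.
   Context: Double cones: sets $s(o_R)$ with $R>0$, $o_R=\{(t,\mathbf x)\in\mathbb R^4:|t|+|\mathbf x|<R\}$, and $s\in\mathscr P^\uparrow_+$ (proper orthochronous Poincaré group); $K$ is ordered by inclusion and $\mathscr P^\uparrow_+$ acts by $o\mapsto s(o)$. A 1-simplex is $b=(|b|;\partial_0b,\partial_1b)$ with $|b|,\partial_0b,\partial_1b\in K$, $\partial_0b,\partial_1b\subseteq|b|$; opposite $\overline b=(|b|;\partial_1b,\partial_0b)$; $s(b)=(s(|b|);s(\partial_0b),s(\partial_1b))$. $\mathcal D_a$: real smooth compactly supported functions on $\mathbb R^4$ vanishing outside the closure of $a$. $\mathrm C^0(K,\mathcal D)$: maps $a\mapsto f_a\in\mathcal D_a$; $\mathrm C^1(K,\mathcal D)$: maps $b\mapsto f_b\in\mathcal D_{|b|}$ on 1-simplices. $S$-action: $(sf)_x=f_{s(x)}\circ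 s$; $\mathrm C^n(K,\mathcal D)^{\mathscr P^\uparrow_+}$ denotes the fixed points. $(\delta f)_b:=f_{\partial_0b}-f_{\partial_1b}+f_{|b|}$ for $f\in\mathrm C^0(K,\mathcal D)$. For $g\in\mathrm C^1(K,\mathcal D)$: $g^{ev}_b=\tfrac12(g_b+g_{\overline b})$, $g^{odd}_b=\tfrac12(g_b-g_{\overline b})$. *)

theory Defs
  imports "HOL-Analysis.Analysis"
begin

text \<open>Minkowski spacetime M^4 is modelled as real^4; coordinate 1 is time,
  coordinates 2,3,4 are space.\<close>

type_synonym pt = "real ^ 4"
type_synonym region = "pt set"

definition time :: "pt \<Rightarrow> real" where "time x = x $ 1"

definition space_norm :: "pt \<Rightarrow> real" where
  "space_norm x = sqrt ((x $ 2)\<^sup>2 + (x $ 3)\<^sup>2 + (x $ 4)\<^sup>2)"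

definition mink :: "pt \<Rightarrow> pt \<Rightarrow> real" where
  "mink x y = x $ 1 * y $ 1 - (x $ 2 * y $ 2 + x $ 3 * y $ 3 + x $ 4 * y $ 4)"

definition lorentz_up_plus :: "real ^ 4 ^ 4 \<Rightarrow> bool" where
  "lorentz_up_plus L \<longleftrightarrow> (\<forall>x y. mink (L *v x) (L *v y) = mink x y)
      \<and> det L = 1 \<and> L $ 1 $ 1 \<ge> 1"

definition poincare :: "((real ^ 4 ^ 4) \<times> pt) set" where
  "poincare = {(L, a). lorentz_up_plus L}"

definition pact :: "(real ^ 4 ^ 4) \<times> pt \<Rightarrow> pt \<Rightarrow> pt" where
  "pact s x = fst s *v x + snd s"

definition dcone :: "real \<Rightarrow> region" where
  "dcone R = {x. \<bar>time x\<bar> + space_norm x < R}"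

definition Kset :: "region set" where
  "Kset = {pact s ` dcone R | s R. s \<in> poincare \<and> R > 0}"

text \<open>Smooth (C-infinity) real functions on R^4: the largest class of everywhere
  differentiable functions closed under taking partial derivatives.\<close>

coinductive smooth :: "(pt \<Rightarrow> real) \<Rightarrow> bool" where
  "(\<forall>x. f differentiable (at x)) \<Longrightarrow>
   (\<forall>i::4. smooth (\<lambda>x. frechet_derivative f (at x) (axis i 1))) \<Longrightarrow> smooth f"

definition Dtest :: "region \<Rightarrow> (pt \<Rightarrow> real) set" where
  "Dtest a = {f. smooth f \<and> compact (closure {x. f x \<noteq> 0})
                 \<and> (\<forall>x. x \<notin> closure a \<longrightarrow> f x = 0)}"

text \<open>1-simplices: triples (|b|, d0 b, d1 b).\<close>

type_synonym simplex1 = "region \<times> region \<times> region"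

definition simplices1 :: "simplex1 set" where
  "simplices1 = {(c, d0, d1). c \<in> Kset \<and> d0 \<in> Kset \<and> d1 \<in> Kset \<and> d0 \<subseteq> c \<and> d1 \<subseteq> c}"

definition supp1 :: "simplex1 \<Rightarrow> region" where "supp1 b = fst b"
definition bd0 :: "simplex1 \<Rightarrow> region" where "bd0 b = fst (snd b)"
definition bd1 :: "simplex1 \<Rightarrow> region" where "bd1 b = snd (snd b)"

definition opp1 :: "simplex1 \<Rightarrow> simplex1" where
  "opp1 b = (supp1 b, bd1 b, bd0 b)"

definition act1 :: "(real ^ 4 ^ 4) \<times> pt \<Rightarrow> simplex1 \<Rightarrow> simplex1" where
  "act1 s b = (pact s ` supp1 b, pact s ` bd0 b, pact s ` bd1 b)"

definition C0 :: "(region \<Rightarrow> pt \<Rightarrow> real) set" where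
  "C0 = {f. \<forall>a\<in>Kset. f a \<in> Dtest a}"

definition C0_inv :: "(region \<Rightarrow> pt \<Rightarrow> real) set" where
  "C0_inv = {f \<in> C0. \<forall>s\<in>poincare. \<forall>a\<in>Kset. f (pact s ` a) \<circ> pact s = f a}"

definition C1 :: "(simplex1 \<Rightarrow> pt \<Rightarrow> real) set" where
  "C1 = {g. \<forall>b\<in>simplices1. g b \<in> Dtest (supp1 b)}"

definition C1_inv :: "(simplex1 \<Rightarrow> pt \<Rightarrow> real) set" where
  "C1_inv = {g \<in> C1. \<forall>s\<in>poincare. \<forall>b\<in>simplices1. g (act1 s b) \<circ> pact s = g b}"

definition delta0 :: "(region \<Rightarrow> pt \<Rightarrow> real) \<Rightarrow> simplex1 \<Rightarrow> pt \<Rightarrow> real" where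
  "delta0 f b = (\<lambda>x. f (bd0 b) x - f (bd1 b) x + f (supp1 b) x)"

definition ev1 :: "(simplex1 \<Rightarrow> pt \<Rightarrow> real) \<Rightarrow> simplex1 \<Rightarrow> pt \<Rightarrow> real" where
  "ev1 g b = (\<lambda>x. (g b x + g (opp1 b) x) / 2)"

definition odd1 :: "(simplex1 \<Rightarrow> pt \<Rightarrow> real) \<Rightarrow> simplex1 \<Rightarrow> pt \<Rightarrow> real" where
  "odd1 g b = (\<lambda>x. (g b x - g (opp1 b) x) / 2)"

end

theory Submission
  imports Defs "HOL-Computational_Algebra.Polynomial"
begin


fun PP :: "nat \<Rightarrow> real poly" where
  "PP 0 = 1" | "PP (Suc k) = [:0,0,1:] * (PP k - pderiv (PP k))"

lemma Dk_pos_deriv: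
  assumes "t > 0"
  shows "((\<lambda>t. poly (PP k) (inverse t) * exp (- inverse t)) has_real_derivative
          poly (PP (Suc k)) (inverse t) * exp (- inverse t)) (at t)"
proof -
  have i: "(inverse has_real_derivative - inverse (t^2)) (at t)"
    using assms by (auto intro!: derivative_eq_intros simp: power2_eq_square)
  have a: "((\<lambda>t. poly (PP k) (inverse t)) has_real_derivative poly (pderiv (PP k)) (inverse t) * (- inverse (t^2))) (at t)"
    by (rule DERIV_chain2[OF poly_DERIV i])
  have b: "((\<lambda>t. exp (- inverse t)) has_real_derivative exp (- inverse t) * inverse (t^2)) (at t)"
    using DERIV_chain2[OF DERIV_exp DERIV_minus[OF i]] by simp
  have "((\<lambda>t. poly (PP k) (inverse t) * exp (- inverse t)) has_real_derivative
     poly (pderiv (PP k)) (inverse t) * (- inverse (t^2)) * exp (- inverse t)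
     + poly (PP k) (inverse t) * (exp (- inverse t) * inverse (t^2))) (at t)"
    using DERIV_mult[OF a b] by (simp add: algebra_simps)
  then show ?thesis by (simp add: algebra_simps power2_eq_square)
qed


definition Dk :: "nat \<Rightarrow> real \<Rightarrow> real" where
  "Dk k t = (if t > 0 then poly (PP k) (inverse t) * exp (- inverse t) else 0)"

lemma lim_poly_exp: "((\<lambda>s. poly p s * s ^ n / exp s) \<longlongrightarrow> (0::real)) at_top"
proof (induction p arbitrary: n rule: pCons_induct)
  case 0 then show ?case by simp
next
  case (pCons a p)
  have e: "(\<lambda>s. poly (pCons a p) s * s ^ n / exp s) = (\<lambda>s. a * (s^n / exp s) + poly p s * s ^ Suc n / exp s)"
    by (auto simp: algebra_simps add_divide_distrib)
  show ?case unfolding e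
    using tendsto_add[OF tendsto_mult[OF tendsto_const tendsto_power_div_exp_0] pCons.IH[of "Suc n"]] by simp
qed

lemma Dk_deriv: "(Dk k has_real_derivative Dk (Suc k) t) (at t)"
proof (cases "t > 0")
  case True
  show ?thesis
    apply (rule has_field_derivative_transform_within_open[where S="{0<..}"])
    using Dk_pos_deriv[OF True, of k] True by (auto simp: Dk_def)
next
  case False
  show ?thesis
  proof (cases "t < 0")
    case True
    show ?thesis
      apply (rule has_field_derivative_transform_within_open[where S="{..<0}" and f="\<lambda>_. 0"])
      using True by (auto simp: Dk_def)
  next
    case False
    with \<open>\<not> t > 0\<close> have t0: "t = 0" by simp
    have r: "((\<lambda>y. (Dk k y - Dk k 0) / (y - 0)) \<longlongrightarrow> 0) (at_right 0)"
    proof -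
      have l: "((\<lambda>s. poly (PP k) s * s ^ 1 / exp s) \<longlongrightarrow> (0::real)) at_top"
        by (rule lim_poly_exp)
      have "((\<lambda>y. poly (PP k) (inverse y) * (inverse y) ^ 1 / exp (inverse y)) \<longlongrightarrow> (0::real)) (at_right 0)"
        using filterlim_compose[OF l filterlim_inverse_at_top_right] by (simp add: o_def)
      then show ?thesis
        apply (rule Lim_transform_eventually)
        using eventually_at_right_less[of "0::real"]
        by eventually_elim (auto simp: Dk_def exp_minus field_simps)
    qed
    have l: "((\<lambda>y. (Dk k y - Dk k 0) / (y - 0)) \<longlongrightarrow> 0) (at_left 0)"
    proof -
      have "eventually (\<lambda>y. y < (0::real)) (at_left 0)" by (simp add: eventually_at_filter)
      then have "eventually (\<lambda>y. 0 = (Dk k y - Dk k 0) / (y - 0)) (at_left 0)"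
        by eventually_elim (auto simp: Dk_def)
      then show ?thesis by (rule Lim_transform_eventually[OF tendsto_const])
    qed
    show ?thesis unfolding t0 has_field_derivative_iff
      using r l filterlim_at_split by (auto simp: Dk_def)
  qed
qed

lemma Dk_nonneg: "Dk 0 t \<ge> 0" by (simp add: Dk_def)
lemma Dk0_pos: "Dk 0 t > 0 \<longleftrightarrow> t > 0" by (simp add: Dk_def)


inductive SP :: "(pt \<Rightarrow> real) \<Rightarrow> bool" where
  SP_const: "SP (\<lambda>x. c)"
| SP_coord: "SP (\<lambda>x. x $ j)"
| SP_add: "SP f \<Longrightarrow> SP g \<Longrightarrow> SP (\<lambda>x. f x + g x)"
| SP_mult: "SP f \<Longrightarrow> SP g \<Longrightarrow> SP (\<lambda>x. f x * g x)"
| SP_comp: "SP f \<Longrightarrow> SP (\<lambda>x. Dk k (f x))"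

lemma SP_deriv: "SP f \<Longrightarrow> \<exists>F. (\<forall>x. (f has_derivative F x) (at x)) \<and> (\<forall>i. SP (\<lambda>x. F x (axis i 1)))"
proof (induction rule: SP.induct)
  case (SP_const c)
  show ?case by (rule exI[of _ "\<lambda>x h. 0"]) (auto intro: SP.intros)
next
  case (SP_coord j)
  show ?case
    by (rule exI[of _ "\<lambda>x h. h $ j"]) (auto intro: SP.intros bounded_linear_imp_has_derivative)
next
  case (SP_add f g)
  then obtain F G where F: "\<forall>x. (f has_derivative F x) (at x)" "\<forall>i. SP (\<lambda>x. F x (axis i 1))"
    and G: "\<forall>x. (g has_derivative G x) (at x)" "\<forall>i. SP (\<lambda>x. G x (axis i 1))" by blast
  show ?case
    by (rule exI[of _ "\<lambda>x h. F x h + G x h"]) (use F G in \<open>auto intro!: SP.intros has_derivative_add\<close>)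
next
  case (SP_mult f g)
  then obtain F G where F: "\<forall>x. (f has_derivative F x) (at x)" "\<forall>i. SP (\<lambda>x. F x (axis i 1))"
    and G: "\<forall>x. (g has_derivative G x) (at x)" "\<forall>i. SP (\<lambda>x. G x (axis i 1))" by blast
  show ?case
    by (rule exI[of _ "\<lambda>x h. f x * G x h + F x h * g x"])
      (use F G SP_mult.hyps in \<open>auto intro!: SP.intros has_derivative_mult\<close>)
next
  case (SP_comp f k)
  then obtain F where F: "\<forall>x. (f has_derivative F x) (at x)" "\<forall>i. SP (\<lambda>x. F x (axis i 1))" by blast
  have d: "\<And>x. ((\<lambda>x. Dk k (f x)) has_derivative (\<lambda>h. Dk (Suc k) (f x) * F x h)) (at x)"
    using has_derivative_compose[OF F(1)[rule_format] has_field_derivative_imp_has_derivative[OF Dk_deriv]]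
    by simp
  show ?case
    by (rule exI[of _ "\<lambda>x h. Dk (Suc k) (f x) * F x h"])
      (use F SP_comp.hyps d in \<open>auto intro!: SP.intros\<close>)
qed

lemma SP_smooth: "SP f \<Longrightarrow> smooth f"
proof (coinduction arbitrary: f rule: smooth.coinduct)
  case (smooth f)
  then obtain F where F: "\<forall>x. (f has_derivative F x) (at x)" "\<forall>i. SP (\<lambda>x. F x (axis i 1))"
    using SP_deriv by blast
  have e: "\<And>i. (\<lambda>x. frechet_derivative f (at x) (axis i 1)) = (\<lambda>x. F x (axis i 1))"
    using F(1) frechet_derivative_at by metis
  show ?case using F by (auto simp: e differentiable_def)
qed


lemma cs3: "(a2*b2+a3*b3+a4*b4)^2 \<le> (a2^2+a3^2+a4^2)*(b2^2+b3^2+b4^2::real)"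
proof -
  have "(a2^2+a3^2+a4^2)*(b2^2+b3^2+b4^2) - (a2*b2+a3*b3+a4*b4)^2
     = (a2*b3-a3*b2)^2 + (a2*b4-a4*b2)^2 + (a3*b4-a4*b3)^2"
    by (simp add: power2_eq_square algebra_simps)
  moreover have "(a2*b3-a3*b2)^2 + (a2*b4-a4*b2)^2 + (a3*b4-a4*b3)^2 \<ge> 0" by simp
  ultimately show ?thesis by linarith
qed

lemma cs_aux:
  fixes u1 u2 u3 u4 w1 w2 w3 w4 :: real
  assumes "u1^2 - (u2^2+u3^2+u4^2) \<ge> 0" "w1^2 - (w2^2+w3^2+w4^2) > 0" "w1 > 0"
    "u1*w1 - (u2*w2+u3*w3+u4*w4) \<ge> 0"
  shows "u1 \<ge> 0"
proof (rule ccontr)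
  assume n: "\<not> u1 \<ge> 0"
  define S where "S = u2*w2+u3*w3+u4*w4"
  define U where "U = u2^2+u3^2+u4^2"
  define W where "W = w2^2+w3^2+w4^2"
  have cs: "S^2 \<le> U*W" unfolding S_def U_def W_def by (rule cs3)
  have U0: "U \<ge> 0" "W \<ge> 0" unfolding U_def W_def by simp_all
  have "U \<le> u1^2" "W < w1^2" using assms unfolding U_def W_def by linarith+
  have u2: "u1^2 > 0" using n by simp
  have "U*W \<le> u1^2 * W" using \<open>U \<le> u1^2\<close> U0 by (simp add: mult_right_mono)
  also have "\<dots> < u1^2 * w1^2" using \<open>W < w1^2\<close> u2 by simp
  finally have "S^2 < (u1*w1)^2" using cs by (simp add: power_mult_distrib)
  then have "\<bar>S\<bar> < \<bar>u1*w1\<bar>" using power2_less_imp_less[of "\<bar>S\<bar>" "\<bar>u1*w1\<bar>"] by simp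
  moreover have "u1*w1 < 0" using n assms(3) by (simp add: mult_neg_pos)
  ultimately show False using assms(4) unfolding S_def by linarith
qed

definition fut :: "pt \<Rightarrow> bool" where "fut v \<longleftrightarrow> mink v v > 0 \<and> v $ 1 > 0"


lemma timelike_orient:
  assumes "mink u u \<ge> 0" "fut w" "mink u w \<ge> 0" shows "u $ 1 \<ge> 0"
  using cs_aux[of "u$1" "u$2" "u$3" "u$4" "w$1" "w$2" "w$3" "w$4"] assms
  by (simp add: fut_def mink_def power2_eq_square)

lemma zero_vec_aux:
  assumes "u $ 1 \<ge> 0" "(-u) $ 1 \<ge> 0" "mink u u \<ge> 0" shows "u = 0"
proof -
  have "u$1 = 0" using assms by simp
  then have "u$2*u$2 + u$3*u$3+u$4*u$4 \<le> 0" using assms(3) by (simp add: mink_def)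
  moreover have "u$2*u$2 \<ge> 0" "u$3*u$3 \<ge> 0" "u$4*u$4 \<ge> 0" by simp_all
  ultimately have "u$2*u$2 = 0" "u$3*u$3 = 0" "u$4*u$4 = 0" by linarith+
  then show ?thesis using \<open>u$1 = 0\<close> by (simp add: vec_eq_iff forall_4)
qed

lemma mink_sym: "mink u v = mink v u" by (simp add: mink_def algebra_simps)
lemma mink_scaleL: "mink (c *\<^sub>R u) v = c * mink u v" by (simp add: mink_def algebra_simps)
lemma mink_scaleR: "mink u (c *\<^sub>R v) = c * mink u v" by (simp add: mink_def algebra_simps)
lemma mink_addL: "mink (u + w) v = mink u v + mink w v" by (simp add: mink_def algebra_simps)
lemma mink_addR: "mink u (v + w) = mink u v + mink u w" by (simp add: mink_def algebra_simps)
lemma mink_neg: "mink (-u) (-v) = mink u v" by (simp add: mink_def algebra_simps)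

lemma lim_aux:
  fixes A B C :: real
  assumes "\<And>e. 0 < e \<Longrightarrow> e < 1 \<Longrightarrow> A + e*B + e^2*C > 0"
  shows "A \<ge> 0"
proof -
  have t: "((\<lambda>e. A + e*B + e^2*C) \<longlongrightarrow> A + 0*B + 0^2*C) (at_right 0)"
    by (intro tendsto_intros)
  have "eventually (\<lambda>e. e \<in> {0<..<1::real}) (at_right 0)" by (rule eventually_at_right_real) simp
  then have "eventually (\<lambda>e. 0 \<le> A + e*B + e^2*C) (at_right 0)"
    by eventually_elim (use assms in \<open>auto intro: less_imp_le\<close>)
  from tendsto_lowerbound[OF t this] show ?thesis by simp
qed

lemma side:
  assumes "\<And>e. 0 < e \<Longrightarrow> e < 1 \<Longrightarrow> mink (u + e *\<^sub>R w) (u + e *\<^sub>R w) > 0 \<and> mink (u + e *\<^sub>R w) w' > 0"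
    and "fut w'"
  shows "u $ 1 \<ge> 0 \<and> mink u u \<ge> 0"
proof -
  have a: "mink u u \<ge> 0"
    apply (rule lim_aux[of _ "2 * mink u w" "mink w w"])
    using assms(1) by (simp add: mink_addL mink_addR mink_scaleL mink_scaleR mink_sym[of w u] power2_eq_square algebra_simps)
  have b: "mink u w' \<ge> 0"
    apply (rule lim_aux[of _ "mink w w'" 0])
    using assms(1) by (simp add: mink_addL mink_scaleL)
  show ?thesis using a b timelike_orient assms(2) by blast
qed


definition inD :: "pt \<Rightarrow> pt \<Rightarrow> pt \<Rightarrow> bool" where
  "inD p q x \<longleftrightarrow> mink (x-p) (x-p) > 0 \<and> mink (q-x) (q-x) > 0 \<and> mink (x-p) (q-p) > 0 \<and> mink (q-x) (q-p) > 0"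

definition DD :: "pt \<Rightarrow> pt \<Rightarrow> region" where "DD p q = {x. inD p q x}"

lemma seg_in:
  assumes "fut (q-p)" "0 < e" "e < 1" shows "p + e *\<^sub>R (q-p) \<in> DD p q"
proof -
  have a: "p + e *\<^sub>R (q-p) - p = e *\<^sub>R (q-p)" by simp
  have b: "q - (p + e *\<^sub>R (q-p)) = (1-e) *\<^sub>R (q-p)" by (simp add: algebra_simps)
  have m: "mink (q-p) (q-p) > 0" using assms by (simp add: fut_def)
  show ?thesis unfolding DD_def inD_def mem_Collect_eq a b
    using assms m by (simp add: mink_scaleL mink_scaleR)
qed

lemma uniq_side:
  assumes "fut (q-p)" "fut (q'-p')" "DD p q \<subseteq> DD p' q'"
  shows "(p-p') $ 1 \<ge> 0 \<and> mink (p-p') (p-p') \<ge> 0 \<and> (q'-q) $ 1 \<ge> 0 \<and> mink (q'-q) (q'-q) \<ge> 0"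
proof -
  have 1: "(p-p') $ 1 \<ge> 0 \<and> mink (p-p') (p-p') \<ge> 0"
  proof (rule side[OF _ assms(2), where w="q-p"])
    fix e :: real assume e: "0 < e" "e < 1"
    have "p + e *\<^sub>R (q-p) \<in> DD p' q'" using seg_in[OF assms(1) e] assms(3) by blast
    moreover have "p + e *\<^sub>R (q-p) - p' = (p - p') + e *\<^sub>R (q-p)" by simp
    ultimately show "mink ((p-p') + e *\<^sub>R (q-p)) ((p-p') + e *\<^sub>R (q-p)) > 0 \<and> mink ((p-p') + e *\<^sub>R (q-p)) (q'-p') > 0"
      unfolding DD_def inD_def by simp
  qed
  have 2: "(q'-q) $ 1 \<ge> 0 \<and> mink (q'-q) (q'-q) \<ge> 0"
  proof (rule side[OF _ assms(2), where w="q-p"])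
    fix e :: real assume e: "0 < e" "e < 1"
    have e': "0 < 1-e" "1-e < 1" using e by auto
    have "p + (1-e) *\<^sub>R (q-p) \<in> DD p' q'" using seg_in[OF assms(1) e'] assms(3) by blast
    moreover have "q' - (p + (1-e) *\<^sub>R (q-p)) = (q' - q) + e *\<^sub>R (q-p)" by (simp add: algebra_simps)
    ultimately show "mink ((q'-q) + e *\<^sub>R (q-p)) ((q'-q) + e *\<^sub>R (q-p)) > 0 \<and> mink ((q'-q) + e *\<^sub>R (q-p)) (q'-p') > 0"
      unfolding DD_def inD_def by simp
  qed
  show ?thesis using 1 2 by blast
qed

lemma DD_uniq:
  assumes "fut (q-p)" "fut (q'-p')" "DD p q = DD p' q'"
  shows "p = p' \<and> q = q'"
proof -
  have A: "(p-p') $ 1 \<ge> 0 \<and> mink (p-p') (p-p') \<ge> 0 \<and> (q'-q) $ 1 \<ge> 0 \<and> mink (q'-q) (q'-q) \<ge> 0"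
    using uniq_side[OF assms(1,2) equalityD1[OF assms(3)]] .
  have B: "(p'-p) $ 1 \<ge> 0 \<and> (q-q') $ 1 \<ge> 0"
    using uniq_side[OF assms(2,1) equalityD2[OF assms(3)]] by blast
  have "p - p' = 0"
  proof (rule zero_vec_aux)
    show "(-(p-p'))$1 \<ge> 0" using B by (simp only: minus_diff_eq)
  qed (use A in blast)+
  moreover have "q' - q = 0"
  proof (rule zero_vec_aux)
    show "(-(q'-q))$1 \<ge> 0" using B by (simp only: minus_diff_eq)
  qed (use A in blast)+
  ultimately show ?thesis by simp
qed

definition rep :: "region \<Rightarrow> pt \<times> pt" where
  "rep a = (SOME pq. fut (snd pq - fst pq) \<and> a = DD (fst pq) (snd pq))"

lemma rep_DD: assumes "fut (q-p)" shows "rep (DD p q) = (p, q)"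
proof -
  have ex: "\<exists>pq. fut (snd pq - fst pq) \<and> DD p q = DD (fst pq) (snd pq)"
    using assms by (intro exI[of _ "(p,q)"]) simp
  have "fut (snd (rep (DD p q)) - fst (rep (DD p q))) \<and> DD p q = DD (fst (rep (DD p q))) (snd (rep (DD p q)))"
    unfolding rep_def by (rule someI_ex[OF ex])
  then have "fst (rep (DD p q)) = p \<and> snd (rep (DD p q)) = q"
    using DD_uniq[OF assms] by metis
  then show ?thesis by (simp add: prod_eq_iff)
qed


lemma pact_diff: "pact s x - pact s y = fst s *v (x - y)"
  by (simp add: pact_def matrix_vector_mult_diff_distrib)

lemma lor_mink: "s \<in> poincare \<Longrightarrow> mink (fst s *v u) (fst s *v v) = mink u v"
  by (auto simp: poincare_def lorentz_up_plus_def)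

lemma inD_pact: "s \<in> poincare \<Longrightarrow> inD (pact s p) (pact s q) (pact s x) \<longleftrightarrow> inD p q x"
  by (simp add: inD_def pact_diff lor_mink)

lemma pact_surj: assumes "s \<in> poincare" shows "\<exists>z. pact s z = y"
proof -
  obtain L a where s: "s = (L, a)" by (cases s)
  have "det L = 1" using assms s by (simp add: poincare_def lorentz_up_plus_def)
  then have "invertible L" by (simp add: invertible_det_nz)
  then obtain B where B: "L ** B = mat 1" by (auto simp: invertible_def)
  have "pact s (B *v (y - a)) = y"
    by (simp add: s pact_def matrix_vector_mul_assoc B)
  then show ?thesis by blast
qed

lemma pact_DD: assumes "s \<in> poincare" shows "pact s ` DD p q = DD (pact s p) (pact s q)"
proof
  show "pact s ` DD p q \<subseteq> DD (pact s p) (pact s q)"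
    using inD_pact[OF assms] by (auto simp: DD_def)
  show "DD (pact s p) (pact s q) \<subseteq> pact s ` DD p q"
  proof
    fix y assume y: "y \<in> DD (pact s p) (pact s q)"
    obtain z where z: "pact s z = y" using pact_surj[OF assms] by blast
    then have "z \<in> DD p q" using y inD_pact[OF assms] by (auto simp: DD_def)
    then show "y \<in> pact s ` DD p q" using z by blast
  qed
qed

definition e1 :: pt where "e1 = axis 1 1"

lemma e1_comp: "e1 $ 1 = 1" "e1 $ 2 = 0" "e1 $ 3 = 0" "e1 $ 4 = 0"
  by (simp_all add: e1_def axis_def)

lemma mink_e1: "mink v e1 = v $ 1" "mink e1 e1 = 1"
  by (simp_all add: mink_def e1_comp)

lemma Le1_time: "(L *v e1) $ 1 = L $ 1 $ 1"
  by (simp add: matrix_vector_mult_def e1_def axis_def sum_4)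

lemma fut_pres: assumes "s \<in> poincare" "fut v" shows "fut (fst s *v v)"
proof -
  have L: "lorentz_up_plus (fst s)" using assms by (auto simp: poincare_def)
  have "(fst s *v e1) $ 1 \<ge> 1" using L Le1_time[of "fst s"] by (simp add: lorentz_up_plus_def)
  then have f1: "fut (fst s *v e1)" using lor_mink[OF assms(1)] mink_e1
    by (simp add: fut_def)
  have m: "mink (fst s *v v) (fst s *v v) > 0" using assms lor_mink by (simp add: fut_def)
  have m2: "mink (fst s *v v) (fst s *v e1) > 0" using assms lor_mink mink_e1 by (simp add: fut_def)
  have t: "(fst s *v v) $ 1 \<ge> 0" using timelike_orient[OF _ f1] m m2 by simp
  have "(fst s *v v) $ 1 \<noteq> 0"
  proof
    assume "(fst s *v v) $ 1 = 0"
    then have "mink (fst s *v v) (fst s *v v) \<le> 0"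
      by (simp add: mink_def) (smt (verit) zero_le_square)
    then show False using m by simp
  qed
  then show ?thesis using t m by (simp add: fut_def)
qed

lemma dc_aux:
  fixes t Y R :: real
  assumes "R > 0" "Y \<ge> 0"
  shows "(\<bar>t\<bar> + sqrt Y < R) \<longleftrightarrow> ((t+R)^2 > Y \<and> (R-t)^2 > Y \<and> t + R > 0 \<and> R - t > 0)"
proof
  assume a: "\<bar>t\<bar> + sqrt Y < R"
  have s0: "sqrt Y \<ge> 0" using assms by simp
  have "Y = (sqrt Y)^2" using assms by simp
  also have "\<dots> < (R - \<bar>t\<bar>)^2" using a s0 by (intro power_strict_mono) auto
  finally have yl: "Y < (R - \<bar>t\<bar>)^2" .
  have r0: "R - \<bar>t\<bar> \<ge> 0" using a s0 by linarith
  have tt: "t + R > 0" "R - t > 0" using a s0 abs_ge_self[of t] abs_ge_minus_self[of t] by linarith+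
  have m1: "(R - \<bar>t\<bar>)^2 \<le> (t+R)^2" using r0 by (intro power_mono) auto
  have m2: "(R - \<bar>t\<bar>)^2 \<le> (R-t)^2" using r0 by (intro power_mono) auto
  show "(t+R)^2 > Y \<and> (R-t)^2 > Y \<and> t + R > 0 \<and> R - t > 0" using yl m1 m2 tt by (intro conjI; linarith)
next
  assume b: "(t+R)^2 > Y \<and> (R-t)^2 > Y \<and> t + R > 0 \<and> R - t > 0"
  have 1: "sqrt Y < sqrt ((t+R)^2)" using b by (intro real_sqrt_less_mono) blast
  have 2: "sqrt Y < sqrt ((R-t)^2)" using b by (intro real_sqrt_less_mono) blast
  have "sqrt Y < t + R" "sqrt Y < R - t" using 1 2 b by (simp_all only: real_sqrt_abs) linarith+
  then show "\<bar>t\<bar> + sqrt Y < R" by (auto simp: abs_if)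
qed

lemma dcone_DD: assumes "R > 0" shows "dcone R = DD (- (R *\<^sub>R e1)) (R *\<^sub>R e1)"
proof -
  have "\<And>x. (\<bar>time x\<bar> + space_norm x < R) \<longleftrightarrow> inD (- (R *\<^sub>R e1)) (R *\<^sub>R e1) x"
  proof -
    fix x :: pt
    have Y: "(x$2)^2 + (x$3)^2 + (x$4)^2 \<ge> 0" by simp
    have h: "0 < R*(R*2) + R*(x$1*2) \<longleftrightarrow> 0 < R + x$1"
    proof -
      have "R*(R*2) + R*(x$1*2) = (2*R)*(R + x$1)" by (simp add: algebra_simps)
      then show ?thesis using assms by (simp add: zero_less_mult_iff)
    qed
    show "(\<bar>time x\<bar> + space_norm x < R) \<longleftrightarrow> inD (- (R *\<^sub>R e1)) (R *\<^sub>R e1) x"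
      unfolding time_def space_norm_def dc_aux[OF assms Y] inD_def mink_def
      using assms by (simp add: e1_comp power2_eq_square algebra_simps h)
  qed
  then show ?thesis by (auto simp: dcone_def DD_def)
qed

lemma Kset_rep: assumes "a \<in> Kset" shows "\<exists>p q. fut (q-p) \<and> a = DD p q"
proof -
  obtain s R where sR: "a = pact s ` dcone R" "s \<in> poincare" "R > 0" using assms by (auto simp: Kset_def)
  let ?p = "pact s (- (R *\<^sub>R e1))" and ?q = "pact s (R *\<^sub>R e1)"
  have "a = DD ?p ?q" using sR dcone_DD pact_DD by simp
  moreover have "fut (?q - ?p)"
  proof -
    have "fut (R *\<^sub>R e1 - - (R *\<^sub>R e1))" using sR(3)
      by (simp add: fut_def mink_def e1_comp)
    then show ?thesis unfolding pact_diff by (rule fut_pres[OF sR(2)])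
  qed
  ultimately show ?thesis by blast
qed

lemma Kset_bounded: assumes "a \<in> Kset" shows "bounded a"
proof -
  obtain s R where sR: "a = pact s ` dcone R" "s \<in> poincare" "R > 0" using assms by (auto simp: Kset_def)
  have "bounded (dcone R)"
  proof -
    have "\<forall>x\<in>dcone R. norm x \<le> 4 * R"
    proof
      fix x assume x: "x \<in> dcone R"
      have c: "\<bar>x$i\<bar> \<le> R" for i
      proof -
        have sn: "\<bar>x$2\<bar> \<le> space_norm x" "\<bar>x$3\<bar> \<le> space_norm x" "\<bar>x$4\<bar> \<le> space_norm x"
          unfolding space_norm_def by (auto intro!: real_le_rsqrt simp: power2_eq_square)
        have "space_norm x \<ge> 0" by (simp add: space_norm_def)
        then show ?thesis using x sn exhaust_4[of i] by (auto simp: dcone_def time_def)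
      qed
      have "norm x \<le> sum (\<lambda>i. \<bar>x$i\<bar>) UNIV" by (rule norm_le_l1_cart)
      also have "\<dots> \<le> sum (\<lambda>i. R) (UNIV::4 set)" by (rule sum_mono) (rule c)
      finally show "norm x \<le> 4 * R" by simp
    qed
    then show ?thesis unfolding bounded_iff by blast
  qed
  then have "bounded ((\<lambda>x. fst s *v x) ` dcone R)"
    by (rule bounded_linear_image) (simp add: linear_linear[symmetric])
  then have "bounded ((\<lambda>x. snd s + x) ` ((\<lambda>x. fst s *v x) ` dcone R))"
    by (rule bounded_translation)
  moreover have "pact s ` dcone R = (\<lambda>x. snd s + x) ` ((\<lambda>x. fst s *v x) ` dcone R)"
    by (auto simp: pact_def image_image add.commute)
  ultimately show ?thesis using sR by simp
qed


definition hh :: "pt \<Rightarrow> pt \<Rightarrow> pt \<Rightarrow> real" where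
  "hh p q x = Dk 0 (mink (x-p) (x-p)) * Dk 0 (mink (q-x) (q-x)) * Dk 0 (mink (x-p) (q-p)) * Dk 0 (mink (q-x) (q-p))"

definition ff :: "region \<Rightarrow> pt \<Rightarrow> real" where
  "ff a = hh (fst (rep a)) (snd (rep a))"

lemma Dk0_nz: "Dk 0 t \<noteq> 0 \<longleftrightarrow> t > 0" by (simp add: Dk_def)

lemma hh_nz: "hh p q x \<noteq> 0 \<longleftrightarrow> x \<in> DD p q"
  by (simp add: hh_def Dk0_nz DD_def inD_def)

lemma hh_nonneg: "hh p q x \<ge> 0"
  by (simp add: hh_def Dk_nonneg)

lemma SP_minus: "SP f \<Longrightarrow> SP g \<Longrightarrow> SP (\<lambda>x. f x - g x)"
proof -
  assume "SP f" "SP g"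
  then have "SP (\<lambda>x. f x + (\<lambda>x. -1) x * g x)" by (intro SP.intros)
  then show ?thesis by simp
qed

lemma SP_mink:
  assumes "\<And>i. SP (\<lambda>x. f x $ i)" "\<And>i. SP (\<lambda>x. g x $ i)"
  shows "SP (\<lambda>x. mink (f x) (g x))"
  unfolding mink_def by (intro SP_minus SP_add SP_mult assms)

lemma SP_c1: "SP (\<lambda>x. (x - p) $ i)" by (simp, intro SP_minus SP.intros)
lemma SP_c2: "SP (\<lambda>x. (q - x) $ i)" by (simp, intro SP_minus SP.intros)
lemma SP_c3: "SP (\<lambda>x. (c::pt) $ i)" by (rule SP_const)

lemma SP_hh: "SP (hh p q)"
proof -
  have "SP (\<lambda>x. Dk 0 (mink (x-p) (x-p)) * Dk 0 (mink (q-x) (q-x)) * Dk 0 (mink (x-p) (q-p)) * Dk 0 (mink (q-x) (q-p)))"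
    by (intro SP_mult SP_comp SP_mink SP_c1 SP_c2 SP_c3)
  then show ?thesis by (simp add: hh_def[abs_def])
qed

lemma hh_inv: "s \<in> poincare \<Longrightarrow> hh (pact s p) (pact s q) (pact s x) = hh p q x"
  by (simp add: hh_def pact_diff lor_mink)

lemma ff_DD: "fut (q-p) \<Longrightarrow> ff (DD p q) = hh p q"
  by (simp add: ff_def rep_DD)

lemma ff_Kset: assumes "a \<in> Kset"
  shows "SP (ff a)" "\<And>x. ff a x \<noteq> 0 \<longleftrightarrow> x \<in> a" "\<And>x. ff a x \<ge> 0" "ff a \<noteq> (\<lambda>x. 0)"
    "\<And>s x. s \<in> poincare \<Longrightarrow> ff (pact s ` a) (pact s x) = ff a x"
proof -
  obtain p q where pq: "fut (q-p)" "a = DD p q" using Kset_rep[OF assms] by blast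
  show "SP (ff a)" using pq ff_DD SP_hh by simp
  show "\<And>x. ff a x \<noteq> 0 \<longleftrightarrow> x \<in> a" using pq ff_DD hh_nz by simp
  show "\<And>x. ff a x \<ge> 0" using pq ff_DD hh_nonneg by simp
  have "p + (1/2) *\<^sub>R (q-p) \<in> DD p q" by (rule seg_in[OF pq(1)]) auto
  then show "ff a \<noteq> (\<lambda>x. 0)" using pq ff_DD hh_nz by metis
  fix s x assume s: "s \<in> poincare"
  have "fut (pact s q - pact s p)" unfolding pact_diff by (rule fut_pres[OF s pq(1)])
  then show "ff (pact s ` a) (pact s x) = ff a x"
    using pq pact_DD[OF s] ff_DD hh_inv[OF s] by simp
qed

lemma Dtest_ff: assumes "a \<in> Kset" shows "ff a \<in> Dtest a"
proof -
  have e: "{x. ff a x \<noteq> 0} = a" using ff_Kset(2)[OF assms] by blast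
  have "\<forall>x. x \<notin> closure a \<longrightarrow> ff a x = 0" using ff_Kset(2)[OF assms] closure_subset[of a] by blast
  then show ?thesis unfolding Dtest_def
    using ff_Kset(1)[OF assms] SP_smooth Kset_bounded[OF assms] e by (simp add: compact_closure)
qed


lemma delta_Dtest: assumes "b \<in> simplices1" shows "delta0 ff b \<in> Dtest (supp1 b)"
proof -
  have K: "supp1 b \<in> Kset" "bd0 b \<in> Kset" "bd1 b \<in> Kset" "bd0 b \<subseteq> supp1 b" "bd1 b \<subseteq> supp1 b"
    using assms by (auto simp: simplices1_def supp1_def bd0_def bd1_def)
  have sp: "SP (delta0 ff b)" unfolding delta0_def
    by (intro SP_add SP_minus ff_Kset(1) K)
  have sub: "{x. delta0 ff b x \<noteq> 0} \<subseteq> supp1 b"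
  proof
    fix x assume "x \<in> {x. delta0 ff b x \<noteq> 0}"
    then have "ff (bd0 b) x \<noteq> 0 \<or> ff (bd1 b) x \<noteq> 0 \<or> ff (supp1 b) x \<noteq> 0"
      by (auto simp: delta0_def)
    then show "x \<in> supp1 b" using ff_Kset(2)[OF K(1)] ff_Kset(2)[OF K(2)] ff_Kset(2)[OF K(3)] K(4,5) by blast
  qed
  have "bounded {x. delta0 ff b x \<noteq> 0}" using Kset_bounded[OF K(1)] sub bounded_subset by blast
  moreover have "\<forall>x. x \<notin> closure (supp1 b) \<longrightarrow> delta0 ff b x = 0"
    using sub closure_subset[of "supp1 b"] by blast
  ultimately show ?thesis unfolding Dtest_def using sp SP_smooth by (simp add: compact_closure)
qed

theorem proposition4p12:
  shows "\<exists>f \<in> C0_inv.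
     (\<forall>a\<in>Kset. f a \<noteq> (\<lambda>x. 0) \<and> (\<forall>x. f a x \<ge> 0))
   \<and> delta0 f \<in> C1_inv
   \<and> (\<forall>b\<in>simplices1. ev1 (delta0 f) b = f (supp1 b)
        \<and> f (supp1 b) \<noteq> (\<lambda>x. 0) \<and> (\<forall>x. f (supp1 b) x \<ge> 0))
   \<and> (\<forall>b\<in>simplices1. bd0 b \<noteq> bd1 b \<longrightarrow>
        odd1 (delta0 f) b = (\<lambda>x. f (bd0 b) x - f (bd1 b) x)
        \<and> (\<lambda>x. f (bd0 b) x - f (bd1 b) x) \<noteq> (\<lambda>x. 0))"
proof -
  have inv: "\<And>s a. s \<in> poincare \<Longrightarrow> a \<in> Kset \<Longrightarrow> ff (pact s ` a) \<circ> pact s = ff a"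
    using ff_Kset(5) by (auto simp: o_def)
  have P1: "ff \<in> C0_inv" unfolding C0_inv_def C0_def using Dtest_ff inv by blast
  have P2: "\<forall>a\<in>Kset. ff a \<noteq> (\<lambda>x. 0) \<and> (\<forall>x. ff a x \<ge> 0)" using ff_Kset by blast
  have "\<And>s b. s \<in> poincare \<Longrightarrow> b \<in> simplices1 \<Longrightarrow> delta0 ff (act1 s b) \<circ> pact s = delta0 ff b"
  proof -
    fix s b assume s: "s \<in> poincare" and b: "b \<in> simplices1"
    have K: "supp1 b \<in> Kset" "bd0 b \<in> Kset" "bd1 b \<in> Kset"
      using b by (auto simp: simplices1_def supp1_def bd0_def bd1_def)
    show "delta0 ff (act1 s b) \<circ> pact s = delta0 ff b"
      by (rule ext) (simp add: delta0_def act1_def supp1_def[of "(_,_,_)"] bd0_def[of "(_,_,_)"]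
          bd1_def[of "(_,_,_)"] ff_Kset(5)[OF K(1) s] ff_Kset(5)[OF K(2) s] ff_Kset(5)[OF K(3) s])
  qed
  then have P3: "delta0 ff \<in> C1_inv" unfolding C1_inv_def C1_def using delta_Dtest by blast
  have P4: "\<forall>b\<in>simplices1. ev1 (delta0 ff) b = ff (supp1 b)
        \<and> ff (supp1 b) \<noteq> (\<lambda>x. 0) \<and> (\<forall>x. ff (supp1 b) x \<ge> 0)"
  proof
    fix b assume b: "b \<in> simplices1"
    have K: "supp1 b \<in> Kset"
      using b by (auto simp: simplices1_def supp1_def bd0_def bd1_def)
    have "ev1 (delta0 ff) b = ff (supp1 b)"
      by (rule ext) (simp add: ev1_def delta0_def opp1_def supp1_def bd0_def bd1_def)
    then show "ev1 (delta0 ff) b = ff (supp1 b)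
        \<and> ff (supp1 b) \<noteq> (\<lambda>x. 0) \<and> (\<forall>x. ff (supp1 b) x \<ge> 0)" using ff_Kset[OF K] by blast
  qed
  have P5: "\<forall>b\<in>simplices1. bd0 b \<noteq> bd1 b \<longrightarrow>
        odd1 (delta0 ff) b = (\<lambda>x. ff (bd0 b) x - ff (bd1 b) x)
        \<and> (\<lambda>x. ff (bd0 b) x - ff (bd1 b) x) \<noteq> (\<lambda>x. 0)"
  proof (intro ballI impI conjI)
    fix b assume b: "b \<in> simplices1" and ne: "bd0 b \<noteq> bd1 b"
    have K: "supp1 b \<in> Kset" "bd0 b \<in> Kset" "bd1 b \<in> Kset"
      using b by (auto simp: simplices1_def supp1_def bd0_def bd1_def)
    show "odd1 (delta0 ff) b = (\<lambda>x. ff (bd0 b) x - ff (bd1 b) x)"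
      by (rule ext) (simp add: odd1_def delta0_def opp1_def supp1_def bd0_def bd1_def)
    show "(\<lambda>x. ff (bd0 b) x - ff (bd1 b) x) \<noteq> (\<lambda>x. 0)"
    proof
      assume "(\<lambda>x. ff (bd0 b) x - ff (bd1 b) x) = (\<lambda>x. 0)"
      then have "\<And>x. ff (bd0 b) x = ff (bd1 b) x" by (metis eq_iff_diff_eq_0)
      then have "\<And>x. x \<in> bd0 b \<longleftrightarrow> x \<in> bd1 b" using ff_Kset(2)[OF K(2)] ff_Kset(2)[OF K(3)] by metis
      then show False using ne by blast
    qed
  qed
  show ?thesis using P1 P2 P3 P4 P5 by blast
qed

end
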